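(* Assume the standing setup with $\lambda_1(\boldsymbol\Omega_K)>1$, and set $\mathbf v_1^{(r)}=\mathbf D_{\boldsymbol\rho^{\odot1/2}}(\mathbf 1_K-\mathbf g(1))$ and $\mathbf v_1^{(l)}=\boldsymbol\Omega_K\mathbf v_1^{(r)}$. Then $\mathbf v_1^{(r)}\succ\mathbf 0_K$, $(\mathbf D_{\mathbf g(1)}\boldsymbol\Omega_K)\mathbf v_1^{(r)}=\mathbf v_1^{(r)}$ and $(\mathbf D_{\mathbf g(1)}\boldsymbol\Omega_K)^\top\mathbf v_1^{(l)}=\mathbf v_1^{(l)}$.
   Context: Standing setup: $K\ge1$, $\boldsymbol\rho=(\rho_k)$ with $\rho_k\in(0,1)$, $\sum\rho_k=1$; $\mathbf S_K=(s_{kl})$ symmetric with $s_{kl}>0$; $\mathbf D_{\mathbf v}$ diagonal with diagonal $\mathbf v$; $\boldsymbol\Omega_K=\mathbf D_{\boldsymbol\rho^{\odot1/2}}\mathbf S_K\mathbf D_{\boldsymbol\rho^{\odot1/2}}$, $\boldsymbol\Gamma_K=\mathbf S_K\mathbf D_{\boldsymbol\rho}$; $\lambda_1$ = largest eigenvalue. For each $N$, $[N]$ is split into consecutive blocks $B_k$ with $|B_k|/N\to\rho_k$; $\Sigma_{ij}=s_{kl}$ for $i\in B_k,j\in B_l$; $\mathbf H$ symmetric with independent standard Gaussian entries on/above the diagonal; $\mathbf X=\mathbf H\odot\boldsymbol\Sigma^{\odot1/2}-N^{-1/2}\mathrm{Diag}(\boldsymbol\Sigma\mathbf 1)$; $\mu_X$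 the a.s. limiting spectral distribution of $\mathbf X/\sqrt N$. QVE: for $z\in\mathbb H_-=\{\Im z<0\}$, $\mathbf g(z)$ is the unique solution in $(\mathbb H_+)^K$ of $\mathbf 1_K=z\mathbf g-\mathbf g\odot\boldsymbol\Gamma_K(\mathbf g-\mathbf 1_K)$, $\sum_k\rho_kg_k$ being the Stieltjes transform of $\mu_X$; $\mathbf g(1)$ is the value at $1$ of its continuous extension to $\mathbb H_-\cup\mathbb R$. $\succ$ is entrywise strict inequality. *)

theory Defs
  imports "HOL-Analysis.Analysis"
begin

text \<open>Index set [K] is rendered as a finite type 'k (so K = CARD('k) \<ge> 1).\<close>

definition diagm :: "'a::zero ^ 'k \<Rightarrow> 'a ^ 'k ^ 'k" where
  "diagm v = (\<chi> i j. if i = j then v $ i else 0)"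

definition cmat :: "real ^ 'k ^ 'k \<Rightarrow> complex ^ 'k ^ 'k" where
  "cmat A = (\<chi> i j. complex_of_real (A $ i $ j))"

definition largest_eigenvalue :: "real ^ 'k ^ 'k \<Rightarrow> real" where
  "largest_eigenvalue A = Max {l. \<exists>v. v \<noteq> 0 \<and> A *v v = l *\<^sub>R v}"

definition Omega_K :: "real ^ 'k \<Rightarrow> real ^ 'k ^ 'k \<Rightarrow> real ^ 'k ^ 'k" where
  "Omega_K rho S = diagm (\<chi> i. sqrt (rho $ i)) ** S ** diagm (\<chi> i. sqrt (rho $ i))"

definition Gamma_K :: "real ^ 'k \<Rightarrow> real ^ 'k ^ 'k \<Rightarrow> real ^ 'k ^ 'k" where
  "Gamma_K rho S = S ** diagm rho"

definition solves_QVE :: "real ^ 'k \<Rightarrow> real ^ 'k ^ 'k \<Rightarrow> complex \<Rightarrow> complex ^ 'k \<Rightarrow> bool" where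
  "solves_QVE rho S z g \<longleftrightarrow>
     (\<forall>k. 1 = z * g $ k - g $ k * ((cmat (Gamma_K rho S) *v (g - 1)) $ k))"

text \<open>For Im z < 0: the unique solution in (H_+)^K.\<close>
definition QVE_g :: "real ^ 'k \<Rightarrow> real ^ 'k ^ 'k \<Rightarrow> complex \<Rightarrow> complex ^ 'k" where
  "QVE_g rho S z = (THE g. (\<forall>k. Im (g $ k) > 0) \<and> solves_QVE rho S z g)"

text \<open>g(1): value at 1 of the continuous extension of g from H_- to H_- \<union> R,
  i.e. the limit of g(z) as z \<rightarrow> 1 within H_-.\<close>
definition QVE_g1 :: "real ^ 'k \<Rightarrow> real ^ 'k ^ 'k \<Rightarrow> complex ^ 'k" where
  "QVE_g1 rho S = Lim (at 1 within {z. Im z < 0}) (QVE_g rho S)"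

end

theory Submission
  imports Defs
begin


definition solq :: "('k \<Rightarrow> 'k \<Rightarrow> real) \<Rightarrow> complex \<Rightarrow> complex ^ 'k \<Rightarrow> bool" where
  "solq M z g \<longleftrightarrow> (\<forall>k. 1 = z * g $ k - g $ k * (\<Sum>l\<in>UNIV. complex_of_real (M k l) * (g $ l - 1)))"

lemma im_rel:
  fixes g z c :: complex
  assumes "1 = z * g - g * c"
  shows "Im g = (cmod g)^2 * (Im c - Im z)" "g \<noteq> 0"
proof -
  have gw: "g * (z - c) = 1" using assms by (simp add: algebra_simps)
  then show "g \<noteq> 0" by auto
  have "cnj g = cnj g * (g * (z - c))" using gw by simp
  also have "\<dots> = (g * cnj g) * (z - c)" by (simp add: algebra_simps)
  also have "\<dots> = complex_of_real ((cmod g)^2) * (z - c)" by (subst complex_norm_square) simp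
  finally have "Im (cnj g) = Im (complex_of_real ((cmod g)^2) * (z - c))" by simp
  then show "Im g = (cmod g)^2 * (Im c - Im z)" by (simp add: algebra_simps)
qed

lemma solq_im:
  assumes "solq M z g"
  shows "Im (g $ k) = (cmod (g $ k))^2 * ((\<Sum>l\<in>UNIV. M k l * Im (g $ l)) - Im z)" "g $ k \<noteq> 0"
proof -
  have e: "1 = z * g $ k - g $ k * (\<Sum>l\<in>UNIV. complex_of_real (M k l) * (g $ l - 1))"
    using assms by (simp add: solq_def)
  have "Im (\<Sum>l\<in>UNIV. complex_of_real (M k l) * (g $ l - 1)) = (\<Sum>l\<in>UNIV. M k l * Im (g $ l))"
    by (simp add: Im_sum)
  with im_rel[OF e] show "Im (g $ k) = (cmod (g $ k))^2 * ((\<Sum>l\<in>UNIV. M k l * Im (g $ l)) - Im z)" "g $ k \<noteq> 0"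
    by auto
qed

lemma cs_sqrt:
  fixes a b :: "'k \<Rightarrow> real"
  assumes "\<And>l. 0 \<le> a l" "\<And>l. 0 \<le> b l"
  shows "(\<Sum>l\<in>A. sqrt (a l * b l)) \<le> sqrt (\<Sum>l\<in>A. a l) * sqrt (\<Sum>l\<in>A. b l)"
proof -
  have "(\<Sum>l\<in>A. sqrt (a l) * sqrt (b l))\<^sup>2 \<le> (\<Sum>l\<in>A. (sqrt (a l))\<^sup>2) * (\<Sum>l\<in>A. (sqrt (b l))\<^sup>2)"
    by (rule Cauchy_Schwarz_ineq_sum)
  also have "\<dots> = (\<Sum>l\<in>A. a l) * (\<Sum>l\<in>A. b l)" using assms by simp
  finally have "(\<Sum>l\<in>A. sqrt (a l * b l))\<^sup>2 \<le> (sqrt (\<Sum>l\<in>A. a l) * sqrt (\<Sum>l\<in>A. b l))\<^sup>2"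
    using assms by (simp add: real_sqrt_mult power_mult_distrib sum_nonneg)
  then show ?thesis
    using assms by (simp add: power2_le_iff_abs_le sum_nonneg)
qed

lemma finite_argmax:
  fixes r :: "'k::finite \<Rightarrow> real"
  obtains k0 where "\<And>k. r k \<le> r k0"
proof -
  have "Max (range r) \<in> range r" by (rule Max_in) auto
  then obtain k0 where k0: "Max (range r) = r k0" by blast
  have "r k \<le> r k0" for k using k0 by (metis Max_ge UNIV_I finite finite_imageI image_eqI)
  then show ?thesis using that by blast
qed

lemma finite_argmin:
  fixes r :: "'k::finite \<Rightarrow> real"
  obtains k0 where "\<And>k. r k0 \<le> r k"
proof -
  obtain k0 where "\<And>k. - r k \<le> - r k0" using finite_argmax[of "\<lambda>k. - r k"] by blast
  then show ?thesis using that by force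
qed

lemma qve_unique:
  fixes M :: "'k::finite \<Rightarrow> 'k \<Rightarrow> real"
  assumes M: "\<And>k l. 0 \<le> M k l" and z: "Im z < 0"
    and g: "solq M z g" and h: "solq M z h"
    and gp: "\<forall>k. Im (g $ k) > 0" and hp: "\<forall>k. Im (h $ k) > 0"
  shows "g = h"
proof -
  define yg where "yg l = Im (g $ l)" for l
  define yh where "yh l = Im (h $ l)" for l
  define w where "w l = sqrt (yg l * yh l)" for l
  have ygp: "yg l > 0" "yh l > 0" for l using gp hp by (auto simp: yg_def yh_def)
  have wp: "w l > 0" for l using ygp by (simp add: w_def)
  have Mg: "0 \<le> M k l * yg l" "0 \<le> M k l * yh l" for k l
    using M[of k l] ygp[of l] by simp_all
  have strict_g: "(cmod (g$k))^2 * (\<Sum>l\<in>UNIV. M k l * yg l) < yg k" for k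
  proof -
    have e: "yg k = (cmod (g $ k))^2 * ((\<Sum>l\<in>UNIV. M k l * yg l) - Im z)"
      unfolding yg_def by (rule solq_im(1)[OF g])
    have "(cmod (g $ k))^2 > 0" using solq_im(2)[OF g] by simp
    then have n: "(cmod (g $ k))^2 * Im z < 0" using z by (rule mult_pos_neg)
    from e have "yg k = (cmod (g $ k))^2 * (\<Sum>l\<in>UNIV. M k l * yg l) - (cmod (g $ k))^2 * Im z"
      by (simp only: right_diff_distrib)
    with n show ?thesis by linarith
  qed
  have strict_h: "(cmod (h$k))^2 * (\<Sum>l\<in>UNIV. M k l * yh l) < yh k" for k
  proof -
    have e: "yh k = (cmod (h $ k))^2 * ((\<Sum>l\<in>UNIV. M k l * yh l) - Im z)"
      unfolding yh_def by (rule solq_im(1)[OF h])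
    have "(cmod (h $ k))^2 > 0" using solq_im(2)[OF h] by simp
    then have n: "(cmod (h $ k))^2 * Im z < 0" using z by (rule mult_pos_neg)
    from e have "yh k = (cmod (h $ k))^2 * (\<Sum>l\<in>UNIV. M k l * yh l) - (cmod (h $ k))^2 * Im z"
      by (simp only: right_diff_distrib)
    with n show ?thesis by linarith
  qed
  have key: "cmod (g$k) * cmod (h$k) * (\<Sum>l\<in>UNIV. M k l * w l) < w k" for k
  proof -
    have "(\<Sum>l\<in>UNIV. M k l * w l) = (\<Sum>l\<in>UNIV. sqrt ((M k l * yg l) * (M k l * yh l)))"
      using M ygp by (intro sum.cong) (auto simp: w_def real_sqrt_mult real_sqrt_mult_self)
    also have "\<dots> \<le> sqrt (\<Sum>l\<in>UNIV. M k l * yg l) * sqrt (\<Sum>l\<in>UNIV. M k l * yh l)"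
      by (rule cs_sqrt) (rule Mg)+
    finally have s: "(\<Sum>l\<in>UNIV. M k l * w l) \<le> sqrt (\<Sum>l\<in>UNIV. M k l * yg l) * sqrt (\<Sum>l\<in>UNIV. M k l * yh l)" .
    have A: "0 \<le> (\<Sum>l\<in>UNIV. M k l * yg l)" "0 \<le> (\<Sum>l\<in>UNIV. M k l * yh l)"
      by (auto intro!: sum_nonneg Mg)
    have "cmod (g$k) * cmod (h$k) * (\<Sum>l\<in>UNIV. M k l * w l)
        \<le> cmod (g$k) * cmod (h$k) * (sqrt (\<Sum>l\<in>UNIV. M k l * yg l) * sqrt (\<Sum>l\<in>UNIV. M k l * yh l))"
      using s by (simp add: mult_left_mono)
    also have "\<dots> = sqrt ((cmod (g$k))^2 * (\<Sum>l\<in>UNIV. M k l * yg l)) * sqrt ((cmod (h$k))^2 * (\<Sum>l\<in>UNIV. M k l * yh l))"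
      by (simp add: real_sqrt_mult)
    also have "\<dots> < sqrt (yg k) * sqrt (yh k)"
      using strict_g[of k] strict_h[of k] A ygp[of k]
      by (intro mult_strict_mono) (auto intro: mult_nonneg_nonneg)
    also have "\<dots> = w k" using ygp by (simp add: w_def real_sqrt_mult)
    finally show ?thesis .
  qed
  define d where "d = g - h"
  have deq: "d $ k = g $ k * h $ k * (\<Sum>l\<in>UNIV. complex_of_real (M k l) * d $ l)" for k
  proof -
    define cg where "cg = (\<Sum>l\<in>UNIV. complex_of_real (M k l) * (g $ l - 1))"
    define ch where "ch = (\<Sum>l\<in>UNIV. complex_of_real (M k l) * (h $ l - 1))"
    have e1: "1 = z * g $ k - g $ k * cg"
      using g by (simp add: solq_def cg_def)
    have e2: "1 = z * h $ k - h $ k * ch"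
      using h by (simp add: solq_def ch_def)
    have cd: "(\<Sum>l\<in>UNIV. complex_of_real (M k l) * d $ l) = cg - ch"
      unfolding cg_def ch_def d_def sum_subtractf[symmetric]
      by (intro sum.cong) (auto simp: right_diff_distrib)
    have "g $ k - h $ k = g $ k * (z * h $ k - h $ k * ch) - h $ k * (z * g $ k - g $ k * cg)"
      using e1 e2 by simp
    also have "\<dots> = g $ k * h $ k * (cg - ch)" by (simp add: algebra_simps)
    finally show ?thesis using cd by (simp add: d_def)
  qed
  have dle: "cmod (d $ k) \<le> cmod (g$k) * cmod (h$k) * (\<Sum>l\<in>UNIV. M k l * cmod (d $ l))" for k
  proof -
    have "cmod (d $ k) = cmod (g$k) * cmod (h$k) * cmod (\<Sum>l\<in>UNIV. complex_of_real (M k l) * d $ l)"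
      by (subst deq) (simp add: norm_mult)
    also have "cmod (\<Sum>l\<in>UNIV. complex_of_real (M k l) * d $ l) \<le> (\<Sum>l\<in>UNIV. M k l * cmod (d $ l))"
      by (rule order_trans[OF norm_sum]) (simp add: norm_mult M)
    finally show ?thesis by (simp add: mult_left_mono)
  qed
  define r where "r k = cmod (d $ k) / w k" for k
  obtain k0 where k0: "\<And>k. r k \<le> r k0" using finite_argmax by blast
  have r0: "r k0 = 0"
  proof (rule ccontr)
    assume "r k0 \<noteq> 0"
    then have rpos: "r k0 > 0" using wp by (simp add: r_def)
    have dl: "cmod (d $ l) \<le> r k0 * w l" for l
      using k0[of l] wp[of l] by (simp add: r_def field_simps)
    have "cmod (d $ k0) \<le> cmod (g$k0) * cmod (h$k0) * (\<Sum>l\<in>UNIV. M k0 l * cmod (d $ l))" by (rule dle)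
    also have "\<dots> \<le> cmod (g$k0) * cmod (h$k0) * (\<Sum>l\<in>UNIV. M k0 l * (r k0 * w l))"
      by (intro mult_left_mono sum_mono) (auto simp: M dl mult_left_mono)
    also have "\<dots> = r k0 * (cmod (g$k0) * cmod (h$k0) * (\<Sum>l\<in>UNIV. M k0 l * w l))"
      by (simp add: sum_distrib_left algebra_simps)
    also have "\<dots> < r k0 * w k0" using key[of k0] rpos by simp
    also have "\<dots> = cmod (d $ k0)" using wp[of k0] by (simp add: r_def)
    finally show False by simp
  qed
  have "d $ k = 0" for k
  proof -
    have "r k \<le> 0" using k0[of k] r0 by simp
    moreover have "r k \<ge> 0" using wp[of k] by (simp add: r_def)
    ultimately have "r k = 0" by simp
    then show ?thesis using wp[of k] by (simp add: r_def)
  qed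
  then show ?thesis by (simp add: d_def vec_eq_iff)
qed



lemma im_pos:
  fixes M :: "'k::finite \<Rightarrow> 'k \<Rightarrow> real"
  assumes M: "\<And>k l. 0 \<le> M k l" and z: "Im z < 0" and g: "solq M z g"
    and u: "\<And>k. 0 < u k" and w: "\<And>k. (cmod (g$k))^2 * (\<Sum>l\<in>UNIV. M k l * u l) \<le> u k"
  shows "Im (g$k) > 0"
proof -
  define y where "y l = Im (g $ l)" for l
  define r where "r l = y l / u l" for l
  obtain k0 where k0: "\<And>k. r k0 \<le> r k" using finite_argmin by blast
  define c where "c = r k0"
  have cpos: "c > 0"
  proof (rule ccontr)
    assume "\<not> c > 0" then have c0: "c \<le> 0" by simp
    have yl: "c * u l \<le> y l" for l using k0[of l] u[of l] by (simp add: c_def r_def field_simps)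
    have s1: "c * (\<Sum>l\<in>UNIV. M k0 l * u l) \<le> (\<Sum>l\<in>UNIV. M k0 l * y l)"
      unfolding sum_distrib_left
    proof (intro sum_mono)
      fix l
      have "M k0 l * (c * u l) \<le> M k0 l * y l" using M[of k0 l] yl[of l] by (rule mult_left_mono[rotated])
      then show "c * (M k0 l * u l) \<le> M k0 l * y l" by (simp add: mult.left_commute)
    qed
    define G where "G = (cmod (g$k0))^2"
    have Gpos: "G > 0" using solq_im(2)[OF g] by (simp add: G_def)
    have ye: "y k0 = G * ((\<Sum>l\<in>UNIV. M k0 l * y l) - Im z)"
      unfolding y_def G_def by (rule solq_im(1)[OF g])
    have a1: "G * (c * (\<Sum>l\<in>UNIV. M k0 l * u l)) \<le> G * (\<Sum>l\<in>UNIV. M k0 l * y l)"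
      using s1 Gpos by (simp add: mult_left_mono)
    have a2: "c * u k0 \<le> c * (G * (\<Sum>l\<in>UNIV. M k0 l * u l))"
      using w[of k0] c0 by (simp add: G_def mult_left_mono_neg)
    have a3: "G * Im z < 0" using Gpos z by (simp add: mult_pos_neg)
    have "y k0 = G * (\<Sum>l\<in>UNIV. M k0 l * y l) - G * Im z" using ye by (simp add: right_diff_distrib)
    moreover have "c * (G * (\<Sum>l\<in>UNIV. M k0 l * u l)) = G * (c * (\<Sum>l\<in>UNIV. M k0 l * u l))" by simp
    ultimately have "c * u k0 < y k0" using a1 a2 a3 by linarith
    moreover have "y k0 = c * u k0" using u[of k0] by (simp add: c_def r_def)
    ultimately show False by simp
  qed
  have "r k > 0" using k0[of k] cpos by (simp add: c_def)
  then show ?thesis using u[of k] by (simp add: r_def y_def zero_less_divide_iff)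
qed



lemma lin_aux: "(R::real) \<le> e \<Longrightarrow> P \<le> e \<Longrightarrow> e \<le> (X - Q)/4 \<Longrightarrow> W \<le> (X - Q)/2 \<Longrightarrow> P + Q \<le> X - R - W"
  by argo

lemma scal:
  fixes gs th u m d e r :: real
  assumes "0 < gs" "gs \<le> th" "th < 1" "0 < u" "u \<le> 1" "m \<le> u" "0 < d" "d \<le> (1-th)/2" "d \<le> 1/4"
    "0 < e" "e \<le> 1/4" "e \<le> (1-th)*d*m/4" "0 \<le> r" "r \<le> e + d*u"
  shows "gs * r / (1 - r) \<le> d * u" "1/2 \<le> 1 - r"
proof -
  have du1: "d * u \<le> 1/4" using assms mult_mono[of d "1/4" u 1] by simp
  have du0: "0 \<le> d * u" using assms by simp
  show r2: "1/2 \<le> 1 - r" using assms du1 by linarith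
  have a1: "gs * r \<le> th * r" using assms by (simp add: mult_right_mono)
  have a2: "th * r \<le> th * (e + d*u)" using assms by (simp add: mult_left_mono)
  have b1: "d*u*(1 - e - d*u) \<le> d*u*(1-r)" using assms du0 by (simp add: mult_left_mono)
  have c1: "d*u*e \<le> e" using du1 assms mult_right_mono[of "d*u" 1 e] by simp
  have c2: "th * e \<le> e" using assms mult_right_mono[of th 1 e] by simp
  have c3: "e \<le> (1-th)*d*u/4"
  proof -
    have "(1-th)*d*m \<le> (1-th)*d*u" using assms by (intro mult_left_mono) auto
    then show ?thesis using assms by linarith
  qed
  have c4: "d*u*(d*u) \<le> d*d*u"
  proof -
    have "d*u*(d*u) = (d*d*u)*u" by simp
    also have "\<dots> \<le> (d*d*u)*1" using assms by (intro mult_left_mono) auto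
    finally show ?thesis by simp
  qed
  have c5: "d*d*u \<le> ((1-th)/2)*d*u"
    using assms by (intro mult_right_mono) auto
  have c3': "e \<le> (d*u - th*(d*u))/4" using c3 by (simp add: algebra_simps)
  have c45: "d*u*(d*u) \<le> (d*u - th*(d*u))/2"
  proof -
    have "((1-th)/2)*d*u = (d*u - th*(d*u))/2" by (simp add: algebra_simps)
    then show ?thesis using c4 c5 by linarith
  qed
  have "th*e + th*(d*u) \<le> d*u - d*u*e - d*u*(d*u)"
    by (rule lin_aux[OF c1 c2 c3' c45])
  then have "th * (e + d*u) \<le> d*u*(1 - e - d*u)" by (simp add: algebra_simps)
  then have "gs * r \<le> d*u*(1-r)" using a1 a2 b1 by linarith
  then show "gs * r / (1 - r) \<le> d * u" using r2 by (simp add: divide_le_eq)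
qed



lemma inner_mv_sym:
  fixes A :: "real ^ 'k ^ 'k"
  assumes "transpose A = A"
  shows "inner (A *v x) y = inner x (A *v y)"
proof -
  have "A *v x = x v* transpose A" by simp
  then have "inner (A *v x) y = inner (x v* A) y" using assms by simp
  also have "\<dots> = inner x (A *v y)" by (rule dot_lmul_matrix)
  finally show ?thesis .
qed

lemma eig_finite:
  fixes A :: "real ^ 'k ^ 'k"
  assumes sym: "transpose A = A"
  shows "finite {l. \<exists>v. v \<noteq> 0 \<and> A *v v = l *\<^sub>R v}"
proof -
  define E where "E = {l. \<exists>v. v \<noteq> 0 \<and> A *v v = l *\<^sub>R v}"
  define ev where "ev l = (SOME v. v \<noteq> 0 \<and> A *v v = l *\<^sub>R v)" for l
  have ev: "ev l \<noteq> 0 \<and> A *v ev l = l *\<^sub>R ev l" if "l \<in> E" for l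
    using that unfolding E_def ev_def mem_Collect_eq by (rule someI_ex)
  have inj: "inj_on ev E"
  proof (rule inj_onI)
    fix a b assume a: "a \<in> E" and b: "b \<in> E" and e: "ev a = ev b"
    have "a *\<^sub>R ev a = b *\<^sub>R ev a" using ev[OF a] ev[OF b] e by metis
    then have "(a - b) *\<^sub>R ev a = 0" by (simp add: scaleR_diff_left)
    then show "a = b" using ev[OF a] by simp
  qed
  have orth: "pairwise orthogonal (ev ` E)"
  proof (clarsimp simp: pairwise_def)
    fix a b assume a: "a \<in> E" and b: "b \<in> E" and ne: "ev a \<noteq> ev b"
    then have ab: "a \<noteq> b" by auto
    have "a * inner (ev a) (ev b) = inner (A *v ev a) (ev b)" using ev[OF a] by simp
    also have "\<dots> = inner (ev a) (A *v ev b)" by (rule inner_mv_sym[OF sym])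
    also have "\<dots> = b * inner (ev a) (ev b)" using ev[OF b] by simp
    finally have "(a - b) * inner (ev a) (ev b) = 0" by (simp add: algebra_simps)
    then show "orthogonal (ev a) (ev b)" using ab by (simp add: orthogonal_def)
  qed
  have "0 \<notin> ev ` E" using ev by auto
  then have "independent (ev ` E)" using orth pairwise_orthogonal_independent by blast
  then have "finite (ev ` E)" using independent_bound by blast
  then show ?thesis using inj finite_imageD unfolding E_def by blast
qed

lemma eig_exists:
  fixes A :: "real ^ 'k ^ 'k"
  assumes pos: "\<And>i j. 0 < A $ i $ j"
  shows "\<exists>l v. v \<noteq> 0 \<and> A *v v = l *\<^sub>R v"
proof -
  define Sx where "Sx = {x::real^'k. (\<forall>i. 0 \<le> x$i) \<and> (\<Sum>i\<in>UNIV. x$i) = 1}"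
  define s where "s x = (\<Sum>i\<in>UNIV. \<Sum>j\<in>UNIV. A$i$j * x$j)" for x :: "real^'k"
  define f where "f x = (\<chi> i. (\<Sum>j\<in>UNIV. A$i$j * x$j) / s x)" for x
  have spos: "s x > 0" if "x \<in> Sx" for x
  proof -
    from that have x0: "\<And>j. 0 \<le> x$j" and x1: "(\<Sum>i\<in>UNIV. x$i) = 1" by (auto simp: Sx_def)
    obtain j0 where "x$j0 \<noteq> 0" using x1 by (metis (no_types) sum.neutral zero_neq_one)
    then have j0: "x$j0 > 0" using x0[of j0] by simp
    have row: "(\<Sum>j\<in>UNIV. A$i$j * x$j) > 0" for i
    proof -
      have "A$i$j0 * x$j0 \<le> (\<Sum>j\<in>UNIV. A$i$j * x$j)"
        by (rule member_le_sum[where f="\<lambda>j. A$i$j * x$j"]) (auto intro: mult_nonneg_nonneg less_imp_le pos x0)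
      moreover have "A$i$j0 * x$j0 > 0" using pos j0 by simp
      ultimately show ?thesis by linarith
    qed
    show ?thesis unfolding s_def by (rule sum_pos) (simp_all add: row)
  qed
  have cpt: "compact Sx"
  proof -
    have cl: "closed Sx" unfolding Sx_def
      by (intro closed_Collect_conj closed_Collect_all closed_Collect_le closed_Collect_eq continuous_intros)
    have "Sx \<subseteq> cbox 0 1"
    proof
      fix x assume x: "x \<in> Sx"
      have "x$i \<le> 1" for i
      proof -
        have "x$i \<le> (\<Sum>i\<in>UNIV. x$i)" by (rule member_le_sum) (use x in \<open>auto simp: Sx_def\<close>)
        then show ?thesis using x by (simp add: Sx_def)
      qed
      then show "x \<in> cbox 0 1" using x by (auto simp: mem_box_cart Sx_def)
    qed
    then have "bounded Sx" using bounded_cbox bounded_subset by blast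
    with cl show ?thesis by (simp add: compact_eq_bounded_closed)
  qed
  have cvx: "convex Sx"
  proof (unfold convex_def, intro ballI allI impI)
    fix x y and u v :: real
    assume x: "x \<in> Sx" and y: "y \<in> Sx" and uv: "0 \<le> u" "0 \<le> v" "u + v = 1"
    have "0 \<le> (u *\<^sub>R x + v *\<^sub>R y) $ i" for i
      using x y uv by (simp add: Sx_def)
    moreover have "(\<Sum>i\<in>UNIV. (u *\<^sub>R x + v *\<^sub>R y) $ i) = u * (\<Sum>i\<in>UNIV. x $ i) + v * (\<Sum>i\<in>UNIV. y $ i)"
      by (simp add: sum.distrib sum_distrib_left)
    ultimately show "u *\<^sub>R x + v *\<^sub>R y \<in> Sx" using x y uv by (simp add: Sx_def)
  qed
  have ne: "Sx \<noteq> {}"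
  proof -
    obtain i0 :: 'k where True by simp
    have "(\<chi> i. if i = i0 then (1::real) else 0) \<in> Sx" by (simp add: Sx_def)
    then show ?thesis by blast
  qed
  have cont: "continuous_on Sx f"
    unfolding f_def s_def
    by (intro continuous_intros) (use spos in \<open>force simp: s_def\<close>)
  have fS: "f \<in> Sx \<rightarrow> Sx"
  proof
    fix x assume x: "x \<in> Sx"
    have x0: "\<And>j. 0 \<le> x$j" using x by (auto simp: Sx_def)
    have "0 \<le> f x $ i" for i
    proof -
      have "0 \<le> (\<Sum>j\<in>UNIV. A$i$j * x$j)"
        by (intro sum_nonneg) (use pos x0 in \<open>simp add: less_imp_le\<close>)
      then show ?thesis using spos[OF x] by (simp add: f_def)
    qed
    moreover have "(\<Sum>i\<in>UNIV. f x $ i) = 1"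
      using spos[OF x] by (simp add: f_def sum_divide_distrib[symmetric] s_def)
    ultimately show "f x \<in> Sx" by (simp add: Sx_def)
  qed
  obtain x where x: "x \<in> Sx" "f x = x" using brouwer[OF cpt cvx ne cont fS] by blast
  have "x \<noteq> 0"
  proof
    assume "x = 0"
    with x(1) show False by (simp add: Sx_def)
  qed
  moreover have "A *v x = s x *\<^sub>R x"
  proof -
    have "(A *v x) $ i = s x * x $ i" for i
    proof -
      have "x $ i = (\<Sum>j\<in>UNIV. A$i$j * x$j) / s x" 
      proof -
        have "x $ i = f x $ i" using x(2) by simp
        also have "\<dots> = (\<Sum>j\<in>UNIV. A$i$j * x$j) / s x" by (simp add: f_def)
        finally show ?thesis .
      qed
      then show ?thesis using spos[OF x(1)] by (simp add: matrix_vector_mult_def field_simps)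
    qed
    then show ?thesis by (simp add: vec_eq_iff)
  qed
  ultimately show ?thesis by blast
qed



lemma diagm_mult_entry: "(diagm v ** A) $ i $ j = v $ i * A $ i $ j"
  by (simp add: diagm_def matrix_matrix_mult_def if_distrib[where f="\<lambda>x. x * _"] cong: if_cong)

lemma mult_diagm_entry: "(A ** diagm v) $ i $ j = A $ i $ j * v $ j"
  by (simp add: diagm_def matrix_matrix_mult_def if_distrib[where f="\<lambda>x. _ * x"] cong: if_cong)

lemma Omega_entry: "Omega_K rho S $ i $ j = sqrt (rho $ i) * S $ i $ j * sqrt (rho $ j)"
  by (simp add: Omega_K_def diagm_mult_entry mult_diagm_entry)

lemma phi_mono: "0 \<le> (a::real) \<Longrightarrow> a \<le> b \<Longrightarrow> a / (1 + a) \<le> b / (1 + b)"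
  by (simp add: field_simps)

lemma pos_fixpoint:
  fixes rho :: "real ^ 'k" and S :: "real ^ 'k ^ 'k"
  assumes rho_pos: "\<And>k. 0 < rho $ k"
    and S_sym: "transpose S = S" and S_pos: "\<And>k l. 0 < S $ k $ l"
    and lam: "largest_eigenvalue (Omega_K rho S) > 1"
  shows "\<exists>u::real^'k. (\<forall>k. 0 < u$k \<and> u$k < 1) \<and>
           (\<forall>k. u$k = (1 - u$k) * (\<Sum>l\<in>UNIV. S$k$l * rho$l * u$l))"
proof -
  define Om where "Om = Omega_K rho S"
  have Ompos: "0 < Om $ i $ j" for i j
    using rho_pos S_pos by (simp add: Om_def Omega_entry)
  have Omnn: "0 \<le> Om $ i $ j" for i j using Ompos[of i j] by simp
  have Omsym: "transpose Om = Om"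
  proof -
    have "S $ j $ i = S $ i $ j" for i j using S_sym by (metis transpose_def vec_lambda_beta)
    then show ?thesis by (simp add: vec_eq_iff transpose_def Om_def Omega_entry mult.commute)
  qed
  define E where "E = {l. \<exists>v. v \<noteq> 0 \<and> Om *v v = l *\<^sub>R v}"
  have "finite E" unfolding E_def by (rule eig_finite[OF Omsym])
  moreover have "E \<noteq> {}" using eig_exists[OF Ompos] unfolding E_def by blast
  ultimately have "Max E \<in> E" by (rule Max_in)
  moreover have "Max E > 1" using lam by (simp add: largest_eigenvalue_def E_def Om_def)
  ultimately obtain l x where l1: "l > 1" and x0: "x \<noteq> 0" and xe: "Om *v x = l *\<^sub>R x"
    unfolding E_def by auto
  define v where "v k = (\<Sum>j\<in>UNIV. Om$k$j * \<bar>x$j\<bar>)" for k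
  have lx: "l * \<bar>x$k\<bar> \<le> v k" for k
  proof -
    have "l * \<bar>x$k\<bar> = \<bar>(Om *v x) $ k\<bar>" using xe l1 by (simp add: abs_mult)
    also have "\<dots> = \<bar>\<Sum>j\<in>UNIV. Om$k$j * x$j\<bar>" by (simp add: matrix_vector_mult_def)
    also have "\<dots> \<le> (\<Sum>j\<in>UNIV. \<bar>Om$k$j * x$j\<bar>)" by (rule sum_abs)
    also have "\<dots> = v k" unfolding v_def using Ompos by (intro sum.cong) (auto simp: abs_mult less_imp_le)
    finally show ?thesis .
  qed
  obtain j0 where j0: "x $ j0 \<noteq> 0" using x0 by (metis vec_eq_iff zero_index)
  have vpos: "v k > 0" for k
  proof -
    have "Om$k$j0 * \<bar>x$j0\<bar> \<le> v k"
      unfolding v_def by (rule member_le_sum) (auto intro!: mult_nonneg_nonneg Omnn)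
    moreover have "Om$k$j0 * \<bar>x$j0\<bar> > 0" using Ompos j0 by simp
    ultimately show ?thesis by linarith
  qed
  have vsup: "l * v k \<le> (\<Sum>j\<in>UNIV. Om$k$j * v j)" for k
  proof -
    have "l * v k = (\<Sum>j\<in>UNIV. Om$k$j * (l * \<bar>x$j\<bar>))"
      by (simp add: v_def sum_distrib_left algebra_simps)
    also have "\<dots> \<le> (\<Sum>j\<in>UNIV. Om$k$j * v j)"
      by (intro sum_mono mult_left_mono lx) (use Ompos in \<open>simp add: less_imp_le\<close>)
    finally show ?thesis .
  qed
  define u0 where "u0 k = v k / sqrt (rho $ k)" for k
  define T where "T u k = (\<Sum>j\<in>UNIV. S$k$j * rho$j * u j)" for u :: "'k \<Rightarrow> real" and k
  have u0pos: "u0 k > 0" for k using vpos rho_pos by (simp add: u0_def)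
  have Tu0: "l * u0 k \<le> T u0 k" for k
  proof -
    have "T u0 k = (\<Sum>j\<in>UNIV. Om$k$j * v j) / sqrt (rho $ k)"
    proof -
      have "T u0 k = (\<Sum>j\<in>UNIV. S$k$j * sqrt (rho$j) * v j)"
        unfolding T_def u0_def
      proof (intro sum.cong refl)
        fix j
        have "rho $ j = sqrt (rho $ j) * sqrt (rho $ j)" using rho_pos[of j] by simp
        then show "S$k$j * rho$j * (v j / sqrt (rho $ j)) = S$k$j * sqrt (rho$j) * v j"
          using rho_pos[of j] by (simp add: field_simps)
      qed
      also have "\<dots> = (\<Sum>j\<in>UNIV. Om$k$j * v j) / sqrt (rho $ k)"
        using rho_pos[of k] by (simp add: Om_def Omega_entry sum_divide_distrib field_simps)
      finally show ?thesis .
    qed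
    moreover have "l * u0 k = l * v k / sqrt (rho $ k)" by (simp add: u0_def)
    ultimately show ?thesis using vsup[of k] rho_pos[of k] by (simp add: divide_right_mono)
  qed
  have T0pos: "T u0 k > 0" for k using Tu0[of k] u0pos[of k] l1
    by (smt (verit) mult_pos_pos)
  define B where "B = (\<Sum>k\<in>UNIV. u0 k + T u0 k)"
  have Bk: "u0 k \<le> B" "T u0 k \<le> B" for k
  proof -
    have "u0 k + T u0 k \<le> B" unfolding B_def
      by (rule member_le_sum[where f="\<lambda>k. u0 k + T u0 k"]) (use u0pos T0pos in \<open>auto intro: add_nonneg_nonneg less_imp_le\<close>)
    then show "u0 k \<le> B" "T u0 k \<le> B" using u0pos[of k] T0pos[of k] by linarith+
  qed
  have Bpos: "B > 0" using Bk(1) u0pos by (meson less_le_trans)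
  define eps where "eps = min 1 (l - 1) / B"
  have epspos: "eps > 0" using l1 Bpos by (simp add: eps_def)
  have eps1: "eps * u0 k \<le> 1" for k
  proof -
    have "eps * u0 k \<le> eps * B" using Bk(1)[of k] epspos by (simp add: mult_left_mono)
    also have "\<dots> = min 1 (l-1)" using Bpos by (simp add: eps_def)
    finally show ?thesis by simp
  qed
  have eps2: "1 + eps * T u0 k \<le> l" for k
  proof -
    have "eps * T u0 k \<le> eps * B" using Bk(2)[of k] epspos by (simp add: mult_left_mono)
    also have "\<dots> = min 1 (l-1)" using Bpos by (simp add: eps_def)
    finally show ?thesis by simp
  qed
  define a :: "real^'k" where "a = (\<chi> k. eps * u0 k)"
  define F where "F w = (\<chi> k. T (\<lambda>j. w $ j) k / (1 + T (\<lambda>j. w $ j) k))" for w :: "real^'k"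
  have Tmono: "T (\<lambda>j. eps * u0 j) k \<le> T (\<lambda>j. w $ j) k" if "w \<in> cbox a 1" for w k
    unfolding T_def
    by (intro sum_mono mult_left_mono) (use that S_pos rho_pos in \<open>auto simp: mem_box_cart a_def less_imp_le\<close>)
  have Teps: "T (\<lambda>j. eps * u0 j) k = eps * T u0 k" for k
    by (simp add: T_def sum_distrib_left algebra_simps)
  have Tnn: "0 \<le> T (\<lambda>j. w $ j) k" if "w \<in> cbox a 1" for w k
    using Tmono[OF that, of k] Teps[of k] epspos T0pos[of k] by (smt (verit) mult_pos_pos)
  have Tnz: "\<forall>x\<in>cbox a 1. 1 + (\<Sum>j\<in>UNIV. S $ k $ j * rho $ j * x $ j) \<noteq> 0" for k
  proof (intro ballI)
    fix x assume "x \<in> cbox a 1"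
    then have "0 \<le> T (\<lambda>j. x$j) k" by (rule Tnn)
    then show "1 + (\<Sum>j\<in>UNIV. S $ k $ j * rho $ j * x $ j) \<noteq> 0" unfolding T_def by linarith
  qed
  have cont: "continuous_on (cbox a 1) F"
    unfolding F_def T_def
    by (intro continuous_intros) (rule Tnz)
  have Fin: "F \<in> cbox a 1 \<rightarrow> cbox a 1"
  proof
    fix w assume w: "w \<in> cbox a 1"
    have "a $ k \<le> F w $ k \<and> F w $ k \<le> 1" for k
    proof -
      let ?t = "T (\<lambda>j. w $ j) k"
      have t0: "0 \<le> ?t" using Tnn[OF w] .
      have "eps * u0 k \<le> eps * T u0 k / l"
        using Tu0[of k] epspos l1 by (simp add: field_simps)
      also have "\<dots> \<le> eps * T u0 k / (1 + eps * T u0 k)"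
        using eps2[of k] epspos T0pos[of k] l1 by (intro divide_left_mono) (auto intro!: mult_pos_pos add_pos_pos)
      also have "\<dots> \<le> ?t / (1 + ?t)"
        using Tmono[OF w, of k] Teps[of k] epspos T0pos[of k] by (intro phi_mono) auto
      finally have "a $ k \<le> F w $ k" by (simp add: a_def F_def)
      moreover have "F w $ k \<le> 1" using t0 by (simp add: F_def)
      ultimately show ?thesis by simp
    qed
    then show "F w \<in> cbox a 1" by (simp add: mem_box_cart)
  qed
  have "a \<in> cbox a 1" using eps1 by (simp add: mem_box_cart a_def)
  then have ne: "cbox a 1 \<noteq> {}" by blast
  obtain w where w: "w \<in> cbox a 1" "F w = w"
    using brouwer[OF compact_cbox convex_box(1) ne cont Fin] by blast
  have fin: "0 < w$k \<and> w$k < 1 \<and> w$k = (1 - w$k) * T (\<lambda>j. w $ j) k" for k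
  proof -
    define t where "t = T (\<lambda>j. w $ j) k"
    have wk: "w $ k = t / (1 + t)"
    proof -
      have "w $ k = F w $ k" using w(2) by simp
      then show ?thesis by (simp add: F_def t_def)
    qed
    have t0: "0 \<le> t" unfolding t_def by (rule Tnn[OF w(1)])
    have ak: "a $ k \<le> w $ k" using w(1) by (simp add: mem_box_cart)
    have "0 < a $ k" using epspos u0pos[of k] by (simp add: a_def)
    then have p: "0 < w $ k" using ak by linarith
    have q: "w $ k < 1" using t0 by (simp add: wk)
    have "(1 - w $ k) * t = w $ k" using t0 by (simp add: wk field_simps)
    then show ?thesis using p q by (simp add: t_def)
  qed
  then have "\<forall>k. 0 < w$k \<and> w$k < 1" "\<forall>k. w$k = (1 - w$k) * T (\<lambda>j. w $ j) k" by auto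
  then show ?thesis unfolding T_def by blast
qed



lemma near_sol:
  fixes M :: "'k::finite \<Rightarrow> 'k \<Rightarrow> real" and u :: "real ^ 'k"
  assumes Mpos: "\<And>k l. 0 < M k l" and u: "\<And>k. 0 < u$k \<and> u$k < 1"
    and fx: "\<And>k. u$k = (1 - u$k) * (\<Sum>l\<in>UNIV. M k l * u$l)"
    and ep: "\<epsilon> > 0"
  shows "\<exists>\<eta>>0. \<forall>z. Im z < 0 \<longrightarrow> cmod (z - 1) \<le> \<eta> \<longrightarrow>
     (\<exists>g. solq M z g \<and> (\<forall>k. Im (g$k) > 0) \<and> norm (g - (\<chi> k. complex_of_real (1 - u$k))) \<le> \<epsilon>)"
proof -
  define gs where "gs k = 1 - u$k" for k
  define gc where "gc = (\<chi> k. complex_of_real (gs k))"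
  have gsb: "0 < gs k" "gs k < 1" for k using u[of k] by (auto simp: gs_def)
  have gsinv: "complex_of_real (gs k) * complex_of_real (1 / gs k) = 1" for k
  proof -
    have "gs k * (1 / gs k) = 1" using gsb[of k] by simp
    then show ?thesis by (metis of_real_1 of_real_mult)
  qed
  have Mnn: "0 \<le> M k l" for k l using Mpos[of k l] by simp
  have Mu: "(\<Sum>l\<in>UNIV. M k l * u$l) = u$k / gs k" for k
    using fx[of k] gsb[of k] by (simp add: gs_def field_simps)
  obtain kt where kt: "\<And>k. gs k \<le> gs kt" using finite_argmax by blast
  obtain kmu where kmu: "\<And>k. gs kmu \<le> gs k" using finite_argmin by blast
  obtain km where km: "\<And>k. u$km \<le> u$k" using finite_argmin[of "\<lambda>k. u$k"] by blast
  define th where "th = gs kt"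
  define mu where "mu = gs kmu"
  define m where "m = u$km"
  have th1: "th < 1" "0 < th" using gsb by (auto simp: th_def)
  have mu0: "0 < mu" using gsb by (simp add: mu_def)
  have m0: "0 < m" using u by (simp add: m_def)
  define N where "N = real CARD('k)"
  have N1: "N \<ge> 1" by (simp add: N_def)
  define d where "d = min (min (\<epsilon> / N) ((1 - th)/2)) (min (1/4) (mu * m / 3))"
  have d0: "0 < d" using ep N1 th1 mu0 m0 by (simp add: d_def)
  have dN: "d \<le> \<epsilon> / N" and dth: "d \<le> (1 - th)/2" and d14: "d \<le> 1/4" and dmu: "d \<le> mu * m / 3"
    unfolding d_def by (meson min.cobounded1 min.cobounded2 order.trans)+
  define eta where "eta = min (1/4) ((1 - th) * d * m / 4)"
  have eta0: "0 < eta" using th1 d0 m0 by (simp add: eta_def)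
  have eta14: "eta \<le> 1/4" and etad: "eta \<le> (1 - th) * d * m / 4" by (simp_all add: eta_def)
  show ?thesis
  proof (intro exI[of _ eta] conjI allI impI eta0)
    fix z :: complex
    assume zim: "Im z < 0" and zc: "cmod (z - 1) \<le> eta"
    define B where "B = {g :: complex^'k. \<forall>k. cmod (g$k - gc$k) \<le> d * u$k}"
    define Dg where "Dg g k = z - (\<Sum>l\<in>UNIV. complex_of_real (M k l) * (g$l - 1))" for g :: "complex^'k" and k
    define Y where "Y g k = (z - 1) - (\<Sum>l\<in>UNIV. complex_of_real (M k l) * (g$l - gc$l))" for g :: "complex^'k" and k
    have DY: "Dg g k = complex_of_real (1 / gs k) + Y g k" for g k
    proof -
      have "(\<Sum>l\<in>UNIV. complex_of_real (M k l) * (g$l - 1)) =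
            (\<Sum>l\<in>UNIV. complex_of_real (M k l) * (g$l - gc$l)) - (\<Sum>l\<in>UNIV. complex_of_real (M k l) * complex_of_real (u$l))"
        unfolding sum_subtractf[symmetric] by (intro sum.cong) (auto simp: gc_def gs_def algebra_simps)
      also have "(\<Sum>l\<in>UNIV. complex_of_real (M k l) * complex_of_real (u$l)) = complex_of_real (u$k / gs k)"
        by (simp add: Mu[symmetric])
      finally have e: "(\<Sum>l\<in>UNIV. complex_of_real (M k l) * (g$l - 1)) =
            (\<Sum>l\<in>UNIV. complex_of_real (M k l) * (g$l - gc$l)) - complex_of_real (u$k / gs k)" .
      have "1 + u$k / gs k = 1 / gs k" using gsb[of k] by (simp add: gs_def field_simps)
      then have "complex_of_real (1 / gs k) = 1 + complex_of_real (u$k / gs k)"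
        by (metis of_real_1 of_real_add)
      then show ?thesis unfolding Dg_def Y_def e by (simp add: algebra_simps)
    qed
    have Ybound: "gs k * cmod (Y g k) \<le> eta + d * u$k" if g: "g \<in> B" for g k
    proof -
      have "cmod (\<Sum>l\<in>UNIV. complex_of_real (M k l) * (g$l - gc$l)) \<le> (\<Sum>l\<in>UNIV. M k l * (d * u$l))"
      proof (rule order_trans[OF norm_sum], intro sum_mono)
        fix l
        have "cmod (g$l - gc$l) \<le> d * u$l" using g by (simp add: B_def)
        then show "cmod (complex_of_real (M k l) * (g$l - gc$l)) \<le> M k l * (d * u$l)"
          using Mnn[of k l] by (simp add: norm_mult mult_left_mono)
      qed
      also have "\<dots> = d * (u$k / gs k)" by (simp add: Mu[symmetric] sum_distrib_left algebra_simps)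
      finally have s: "cmod (\<Sum>l\<in>UNIV. complex_of_real (M k l) * (g$l - gc$l)) \<le> d * (u$k / gs k)" .
      have "cmod (Y g k) \<le> cmod (z - 1) + cmod (\<Sum>l\<in>UNIV. complex_of_real (M k l) * (g$l - gc$l))"
        unfolding Y_def by (rule norm_triangle_ineq4)
      also have "\<dots> \<le> eta + d * (u$k / gs k)" using zc s by linarith
      finally have "gs k * cmod (Y g k) \<le> gs k * (eta + d * (u$k / gs k))"
        using gsb[of k] by (simp add: mult_left_mono)
      also have "\<dots> = gs k * eta + d * u$k" using gsb[of k] by (simp add: field_simps)
      also have "\<dots> \<le> eta + d * u$k" using gsb[of k] eta0 mult_right_mono[of "gs k" 1 eta] by simp
      finally show ?thesis .
    qed
    have r12: "1/2 \<le> 1 - gs k * cmod (Y g k)" and Tb: "gs k * (gs k * cmod (Y g k)) / (1 - gs k * cmod (Y g k)) \<le> d * u$k"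
      if g: "g \<in> B" for g k
    proof -
      have a: "0 \<le> gs k * cmod (Y g k)" using gsb[of k] by simp
      note sc = scal[of "gs k" th "u$k" m d eta "gs k * cmod (Y g k)", OF gsb(1) kt[unfolded th_def[symmetric]] th1(1)
        conjunct1[OF u] less_imp_le[OF conjunct2[OF u]] km[unfolded m_def[symmetric]] d0 dth d14 eta0 eta14 etad a Ybound[OF g]]
      show "1/2 \<le> 1 - gs k * cmod (Y g k)" by (rule sc(2))
      show "gs k * (gs k * cmod (Y g k)) / (1 - gs k * cmod (Y g k)) \<le> d * u$k" by (rule sc(1))
    qed
    have Wnorm: "1 - gs k * cmod (Y g k) \<le> cmod (1 + complex_of_real (gs k) * Y g k)" for g k
    proof -
      have "cmod (1::complex) - cmod (complex_of_real (gs k) * Y g k) \<le> cmod (1 + complex_of_real (gs k) * Y g k)"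
        by (rule norm_diff_ineq)
      then show ?thesis using gsb[of k] by (simp add: norm_mult)
    qed
    have Dnz: "Dg g k \<noteq> 0" if g: "g \<in> B" for g k
    proof
      assume D0: "Dg g k = 0"
      have "complex_of_real (gs k) * Dg g k = 1 + complex_of_real (gs k) * Y g k"
        using gsb[of k] by (simp add: DY distrib_left gsinv)
      then have "1 + complex_of_real (gs k) * Y g k = 0" using D0 by simp
      then show False using Wnorm[of k g] r12[OF g, of k] by simp
    qed
    define T where "T g = (\<chi> k. 1 / Dg g k)" for g
    have TB: "T \<in> B \<rightarrow> B"
    proof
      fix g assume g: "g \<in> B"
      have "cmod (T g $ k - gc $ k) \<le> d * u$k" for k
      proof -
        define W where "W = 1 + complex_of_real (gs k) * Y g k"
        have gD: "complex_of_real (gs k) * Dg g k = W"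
          using gsb[of k] by (simp add: W_def DY distrib_left gsinv)
        have W0: "W \<noteq> 0"
        proof -
          have "complex_of_real (gs k) \<noteq> 0" using gsb[of k] by simp
          then show ?thesis using Dnz[OF g, of k] gD[symmetric] by simp
        qed
        have gnz: "complex_of_real (gs k) \<noteq> 0" using gsb[of k] by simp
        have "complex_of_real (gs k) / W = complex_of_real (gs k) / (complex_of_real (gs k) * Dg g k)"
          using gD by simp
        also have "\<dots> = 1 / Dg g k" using gnz by simp
        finally have "T g $ k = complex_of_real (gs k) / W" by (simp add: T_def)
        then have "T g $ k - gc $ k = complex_of_real (gs k) / W - complex_of_real (gs k)"
          by (simp add: gc_def)
        also have "\<dots> = - complex_of_real (gs k) * (complex_of_real (gs k) * Y g k) / W"
          using W0 by (simp add: W_def field_simps)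
        finally have "cmod (T g $ k - gc $ k) = gs k * (gs k * cmod (Y g k)) / cmod W"
          using gsb[of k] by (simp add: norm_mult norm_divide)
        also have "\<dots> \<le> gs k * (gs k * cmod (Y g k)) / (1 - gs k * cmod (Y g k))"
        proof (rule divide_left_mono)
          have p: "0 < 1 - gs k * cmod (Y g k)" using r12[OF g, of k] by linarith
          show "1 - gs k * cmod (Y g k) \<le> cmod W" using Wnorm[of k g] by (simp add: W_def)
          show "0 \<le> gs k * (gs k * cmod (Y g k))" using gsb[of k] by simp
          have "0 < cmod W" unfolding W_def by (rule less_le_trans[OF p Wnorm[of k g]])
          then show "0 < cmod W * (1 - gs k * cmod (Y g k))" using p by simp
        qed
        also have "\<dots> \<le> d * u$k" by (rule Tb[OF g])
        finally show ?thesis .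
      qed
      then show "T g \<in> B" by (simp add: B_def)
    qed
    have Bcl: "closed B" unfolding B_def
      by (intro closed_Collect_all closed_Collect_le continuous_intros)
    have Bbd: "bounded B"
    proof -
      have "B \<subseteq> cball gc (\<Sum>k\<in>UNIV. d * u$k)"
      proof
        fix g assume g: "g \<in> B"
        have "dist gc g = norm (g - gc)" by (simp add: dist_norm norm_minus_commute)
        also have "\<dots> \<le> (\<Sum>k\<in>UNIV. norm ((g - gc)$k))" by (simp add: norm_vec_def L2_set_le_sum)
        also have "\<dots> \<le> (\<Sum>k\<in>UNIV. d * u$k)" using g by (intro sum_mono) (simp add: B_def)
        finally show "g \<in> cball gc (\<Sum>k\<in>UNIV. d * u$k)" by simp
      qed
      then show ?thesis using bounded_cball bounded_subset by blast
    qed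
    have Bcpt: "compact B" using Bcl Bbd by (simp add: compact_eq_bounded_closed)
    have Bcvx: "convex B"
    proof (unfold convex_def, intro ballI allI impI)
      fix x y and a b :: real
      assume x: "x \<in> B" and y: "y \<in> B" and ab: "0 \<le> a" "0 \<le> b" "a + b = 1"
      have "cmod ((a *\<^sub>R x + b *\<^sub>R y) $ k - gc $ k) \<le> d * u$k" for k
      proof -
        have "(a *\<^sub>R x + b *\<^sub>R y) $ k - gc $ k = a *\<^sub>R (x$k - gc$k) + b *\<^sub>R (y$k - gc$k)"
          using ab by (simp add: algebra_simps scaleR_add_left[symmetric])
        then have "cmod ((a *\<^sub>R x + b *\<^sub>R y) $ k - gc $ k) \<le> a * cmod (x$k - gc$k) + b * cmod (y$k - gc$k)"
          using ab by (metis (no_types) abs_of_nonneg norm_scaleR norm_triangle_ineq)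
        also have "\<dots> \<le> a * (d * u$k) + b * (d * u$k)"
          using x y ab by (intro add_mono mult_left_mono) (auto simp: B_def)
        also have "\<dots> = (a + b) * (d * u$k)" by (simp add: distrib_right)
        also have "\<dots> = d * u$k" using ab(3) by simp
        finally show ?thesis .
      qed
      then show "a *\<^sub>R x + b *\<^sub>R y \<in> B" by (simp add: B_def)
    qed
    have Bne: "B \<noteq> {}"
    proof -
      have "gc \<in> B" using d0 u by (simp add: B_def less_imp_le)
      then show ?thesis by blast
    qed
    have Tcont: "continuous_on B T"
      unfolding T_def Dg_def
      by (intro continuous_intros) (use Dnz in \<open>force simp: Dg_def\<close>)
    obtain g where g: "g \<in> B" "T g = g" using brouwer[OF Bcpt Bcvx Bne Tcont TB] by blast
    have sol: "solq M z g"
      unfolding solq_def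
    proof
      fix k
      have "g $ k = 1 / Dg g k" using g(2) by (metis T_def vec_lambda_beta)
      then have "g $ k * Dg g k = 1" using Dnz[OF g(1), of k] by simp
      then show "1 = z * g $ k - g $ k * (\<Sum>l\<in>UNIV. complex_of_real (M k l) * (g $ l - 1))"
        by (simp add: Dg_def algebra_simps)
    qed
    have gsq: "(cmod (g$k))^2 * (\<Sum>l\<in>UNIV. M k l * u$l) \<le> u$k" for k
    proof -
      have c1: "cmod (g$k) \<le> gs k + d"
      proof -
        have "cmod (g$k) \<le> cmod (gc$k) + cmod (g$k - gc$k)" by (rule norm_triangle_sub)
        also have "\<dots> \<le> gs k + d * u$k" using g(1) gsb[of k] by (simp add: B_def gc_def)
        also have "\<dots> \<le> gs k + d" using d0 u[of k] mult_left_mono[of "u$k" 1 d] by simp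
        finally show ?thesis .
      qed
      have "(cmod (g$k))^2 \<le> (gs k + d)^2" using c1 by (simp add: power_mono)
      also have "\<dots> \<le> gs k"
      proof -
        have e1: "2 * gs k * d \<le> 2 * d" using gsb[of k] d0 by simp
        have e2: "d * d \<le> d" using d0 d14 mult_left_mono[of d 1 d] by simp
        have e3: "mu * m \<le> gs k * u$k" using kmu[of k] km[of k] mu0 m0
          by (intro mult_mono) (auto simp: mu_def m_def)
        have "(gs k + d)^2 = gs k * gs k + (2 * gs k * d + d * d)" by (simp add: power2_eq_square algebra_simps)
        moreover have "gs k * u$k = gs k - gs k * gs k" by (simp add: gs_def algebra_simps)
        ultimately show ?thesis using e1 e2 e3 dmu by argo
      qed
      finally have "(cmod (g$k))^2 \<le> gs k" .
      then have "(cmod (g$k))^2 * (u$k / gs k) \<le> gs k * (u$k / gs k)"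
        using u[of k] gsb[of k] by (intro mult_right_mono) auto
      then show ?thesis using gsb[of k] by (simp add: Mu)
    qed
    have impos: "\<forall>k. Im (g$k) > 0"
      using im_pos[of M z g "\<lambda>l. u$l", OF Mnn zim sol] u gsq by blast
    have "norm (g - gc) \<le> \<epsilon>"
    proof -
      have "norm (g - gc) \<le> (\<Sum>k\<in>UNIV. norm ((g - gc)$k))" by (simp add: norm_vec_def L2_set_le_sum)
      also have "\<dots> \<le> (\<Sum>k\<in>(UNIV::'k set). d)"
      proof (intro sum_mono)
        fix k
        have "norm ((g - gc)$k) \<le> d * u$k" using g(1) by (simp add: B_def)
        also have "\<dots> \<le> d" using d0 u[of k] mult_left_mono[of "u$k" 1 d] by simp
        finally show "norm ((g - gc)$k) \<le> d" .
      qed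
      also have "\<dots> = N * d" by (simp add: N_def)
      also have "\<dots> \<le> N * (\<epsilon> / N)" using N1 by (intro mult_left_mono[OF dN]) simp
      also have "\<dots> = \<epsilon>" using N1 by simp
      finally show ?thesis .
    qed
    then show "\<exists>g. solq M z g \<and> (\<forall>k. 0 < Im (g $ k)) \<and> norm (g - (\<chi> k. complex_of_real (1 - u $ k))) \<le> \<epsilon>"
      using sol impos unfolding gc_def gs_def by blast
  qed
qed



lemma solves_QVE_solq:
  "solves_QVE rho S z g \<longleftrightarrow> solq (\<lambda>k l. S$k$l * rho$l) z g"
proof -
  have "(cmat (Gamma_K rho S) *v (g - 1)) $ k = (\<Sum>l\<in>UNIV. complex_of_real (S$k$l * rho$l) * (g$l - 1))" for k
    by (simp add: matrix_vector_mult_def cmat_def Gamma_K_def mult_diagm_entry)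
  then show ?thesis by (simp add: solves_QVE_def solq_def)
qed

theorem mainTheorem11:
  fixes rho :: "real ^ 'k" and S :: "real ^ 'k ^ 'k"
  assumes rho_pos: "\<And>k. 0 < rho $ k" and rho_lt1: "\<And>k. rho $ k < 1"
    and rho_sum: "(\<Sum>k\<in>UNIV. rho $ k) = 1"
    and S_sym: "transpose S = S" and S_pos: "\<And>k l. 0 < S $ k $ l"
    and lam: "largest_eigenvalue (Omega_K rho S) > 1"
  defines "vr \<equiv> cmat (diagm (\<chi> k. sqrt (rho $ k))) *v (1 - QVE_g1 rho S)"
    and "vl \<equiv> cmat (Omega_K rho S) *v (cmat (diagm (\<chi> k. sqrt (rho $ k))) *v (1 - QVE_g1 rho S))"
  shows "(\<forall>k. Im (vr $ k) = 0 \<and> Re (vr $ k) > 0)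
    \<and> (diagm (QVE_g1 rho S) ** cmat (Omega_K rho S)) *v vr = vr
    \<and> transpose (diagm (QVE_g1 rho S) ** cmat (Omega_K rho S)) *v vl = vl"
proof -
  obtain u :: "real^'k" where u: "\<And>k. 0 < u$k \<and> u$k < 1"
    and fx: "\<And>k. u$k = (1 - u$k) * (\<Sum>l\<in>UNIV. S$k$l * rho$l * u$l)"
    using pos_fixpoint[OF rho_pos S_sym S_pos lam] by blast
  define M where "M k l = S$k$l * rho$l" for k l
  have Mpos: "0 < M k l" for k l using S_pos rho_pos by (simp add: M_def)
  have fxM: "u$k = (1 - u$k) * (\<Sum>l\<in>UNIV. M k l * u$l)" for k using fx[of k] by (simp add: M_def)
  define gst where "gst = (\<chi> k. complex_of_real (1 - u$k))"
  define H where "H = {z::complex. Im z < 0}"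
  have lim: "(QVE_g rho S \<longlongrightarrow> gst) (at 1 within H)"
  proof (rule tendstoI)
    fix e :: real assume e: "0 < e"
    obtain eta where eta: "eta > 0" and
      P: "\<And>z. Im z < 0 \<Longrightarrow> cmod (z - 1) \<le> eta \<Longrightarrow>
          (\<exists>g. solq M z g \<and> (\<forall>k. Im (g$k) > 0) \<and> norm (g - gst) \<le> e/2)"
      using near_sol[OF Mpos u fxM, of "e/2"] e unfolding gst_def by auto
    show "\<forall>\<^sub>F z in at 1 within H. dist (QVE_g rho S z) gst < e"
      unfolding eventually_at
    proof (intro exI[of _ eta] conjI eta ballI impI)
      fix z assume zH: "z \<in> H" and zd: "z \<noteq> 1 \<and> dist z 1 < eta"
      have zim: "Im z < 0" using zH by (simp add: H_def)
      have "cmod (z - 1) \<le> eta" using zd by (simp add: dist_norm)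
      then obtain g where g: "solq M z g" "\<forall>k. Im (g$k) > 0" "norm (g - gst) \<le> e/2"
        using P[OF zim] by blast
      have "QVE_g rho S z = g"
        unfolding QVE_g_def
      proof (rule the_equality)
        show "(\<forall>k. 0 < Im (g $ k)) \<and> solves_QVE rho S z g"
          using g by (simp add: solves_QVE_solq M_def[abs_def])
        fix h assume h: "(\<forall>k. 0 < Im (h $ k)) \<and> solves_QVE rho S z h"
        have hs: "solq M z h" using h by (simp add: solves_QVE_solq M_def[abs_def])
        show "h = g"
          by (rule qve_unique[OF _ zim hs g(1)]) (use Mpos h g in \<open>auto intro: less_imp_le\<close>)
      qed
      then show "dist (QVE_g rho S z) gst < e" using g(3) e by (simp add: dist_norm)
    qed
  qed
  have ntriv: "\<not> trivial_limit (at (1::complex) within H)"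
  proof -
    have "(1::complex) islimpt H"
    proof (unfold islimpt_approachable, intro allI impI)
      fix e :: real assume e: "0 < e"
      define x where "x = 1 - \<i> * complex_of_real (e/2)"
      have "x \<in> H" using e by (simp add: x_def H_def)
      moreover have "x \<noteq> 1" using e by (simp add: x_def complex_eq_iff)
      moreover have "dist x 1 < e" using e by (simp add: x_def dist_norm norm_mult)
      ultimately show "\<exists>x'\<in>H. x' \<noteq> 1 \<and> dist x' 1 < e" by blast
    qed
    then show ?thesis by (simp add: trivial_limit_within)
  qed
  have g1: "QVE_g1 rho S = gst"
    unfolding QVE_g1_def H_def[symmetric] by (rule tendsto_Lim[OF ntriv lim])
  define Om where "Om = Omega_K rho S"
  have Omsym: "Om $ j $ i = Om $ i $ j" for i j
  proof -
    have "S $ j $ i = S $ i $ j" using S_sym by (metis transpose_def vec_lambda_beta)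
    then show ?thesis by (simp add: Om_def Omega_entry)
  qed
  have vrk: "vr $ j = complex_of_real (sqrt (rho$j) * u$j)" for j
  proof -
    have "vr $ j = (\<Sum>i\<in>UNIV. complex_of_real (if j = i then sqrt (rho$j) else 0) * (1 - gst $ i))"
      by (simp add: vr_def g1 matrix_vector_mult_def cmat_def diagm_def, intro sum.cong) auto
    also have "\<dots> = complex_of_real (sqrt (rho$j)) * (1 - gst $ j)"
      by (simp add: if_distrib[where f=complex_of_real] if_distrib[where f="\<lambda>x. x * _"] cong: if_cong)
    also have "\<dots> = complex_of_real (sqrt (rho$j) * u$j)" by (simp add: gst_def)
    finally show ?thesis .
  qed
  have part1: "\<forall>k. Im (vr $ k) = 0 \<and> Re (vr $ k) > 0"
    using vrk u rho_pos by simp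
  have eig: "(diagm gst ** cmat Om) *v vr = vr"
  proof -
    have "((diagm gst ** cmat Om) *v vr) $ k = vr $ k" for k
    proof -
      have "((diagm gst ** cmat Om) *v vr) $ k =
            complex_of_real (\<Sum>j\<in>UNIV. (1 - u$k) * Om$k$j * (sqrt (rho$j) * u$j))"
        by (simp add: matrix_vector_mult_def diagm_mult_entry gst_def cmat_def vrk)
      also have "(\<Sum>j\<in>UNIV. (1 - u$k) * Om$k$j * (sqrt (rho$j) * u$j)) =
                 sqrt (rho$k) * ((1 - u$k) * (\<Sum>j\<in>UNIV. S$k$j * rho$j * u$j))"
      proof -
        have tj: "(1 - u$k) * Om$k$j * (sqrt (rho$j) * u$j) = sqrt (rho$k) * ((1 - u$k) * (S$k$j * rho$j * u$j))" for j
        proof -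
          have "sqrt (rho$j) * sqrt (rho$j) = rho$j" using rho_pos[of j] by simp
          then show ?thesis by (simp add: Om_def Omega_entry)
        qed
        have "(\<Sum>j\<in>UNIV. (1 - u$k) * Om$k$j * (sqrt (rho$j) * u$j)) =
              (\<Sum>j\<in>UNIV. sqrt (rho$k) * ((1 - u$k) * (S$k$j * rho$j * u$j)))"
          by (rule sum.cong[OF refl tj])
        then show ?thesis by (simp only: sum_distrib_left)
      qed
      also have "\<dots> = sqrt (rho$k) * u$k" using fx[of k] by simp
      finally show ?thesis by (simp add: vrk)
    qed
    then show ?thesis by (simp add: vec_eq_iff)
  qed
  have tr: "transpose (diagm gst ** cmat Om) = cmat Om ** diagm gst"
  proof -
    have "transpose (cmat Om) = cmat Om" by (simp add: vec_eq_iff transpose_def cmat_def Omsym)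
    moreover have "transpose (diagm gst) = diagm gst" by (simp add: vec_eq_iff transpose_def diagm_def)
    ultimately show ?thesis by (simp add: matrix_transpose_mul)
  qed
  have vlv: "vl = cmat Om *v vr" by (simp add: vl_def vr_def Om_def)
  have part3: "transpose (diagm gst ** cmat Om) *v vl = vl"
  proof -
    have "transpose (diagm gst ** cmat Om) *v vl = cmat Om *v (diagm gst *v (cmat Om *v vr))"
      by (simp add: tr vlv matrix_vector_mul_assoc matrix_mul_assoc)
    also have "diagm gst *v (cmat Om *v vr) = vr" using eig by (simp add: matrix_vector_mul_assoc)
    finally show ?thesis by (simp add: vlv)
  qed
  show ?thesis using part1 eig part3 by (simp add: g1 Om_def)
qed


end
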